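(* Let $f:\mathbb{R}^n\to\mathbb{R}$ be differentiable, $\mu$-strongly convex, with $L$-Lipschitz gradient $\nabla f$, and let $x^*$ be its unique minimizer. Let $\mathcal{E}^t$ denote the event $\|\nabla f(x^t)\|_\infty\le\eta$. Then the iterate $x^{t+1}$ of Markov gradient descent satisfies $$\mathbb{E}\left[\|x^{t+1}-x^*\|_2^2\,\middle|\,x^t,\mathcal{E}^t\right]\le\Big(1-\frac{2\alpha\mu}{\eta}\Big)\|x^t-x^*\|_2^2+\frac{L\alpha^2\sqrt{n}}{\eta}\|x^t-x^*\|_2 .$$
   Context: A differentiable $f$ is $\mu$-strongly convex if $\langle\nabla f(x)-\nabla f(y),x-y\rangle\ge\mu\|x-y\|_2^2$ for all $x,y$. Markov gradient descent (MGD) with lattice resolution $\alpha>0$ and normalizer $\eta>0$: start at $x^0\in\alpha\mathbb{Z}^n$; at step $t$, for each coordinate $i$, conditionally on $x^t$, $\Delta^t_i\in\{0,1\}$ is Bernoulli with $\mathbb{P}[\Delta^t_i=1\mid x^t]=\min(|\partial_i f(x^t)|/\eta,1)$, and $x^{t+1}_i=x^t_i-\alpha\,\mathrm{sgn}(\partial_i f(x^t))\Delta^t_i$. *)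

theory Defs
  imports "HOL-Analysis.Analysis" "HOL-Probability.Probability"
begin

definition lattice :: "real \<Rightarrow> (real ^ 'n) set" where
  "lattice \<alpha> = {x. \<exists>k :: 'n \<Rightarrow> int. x = (\<chi> i. \<alpha> * of_int (k i))}"

definition linf_norm :: "real ^ 'n \<Rightarrow> real" where
  "linf_norm v = Max (range (\<lambda>i. \<bar>v $ i\<bar>))"

text \<open>One step of Markov gradient descent from state x, where grad is the gradient of f:
  the distribution of x^{t+1} conditionally on x^t = x.\<close>
definition mgd_step :: "real \<Rightarrow> real \<Rightarrow> (real ^ 'n \<Rightarrow> real ^ 'n) \<Rightarrow> real ^ 'n \<Rightarrow> (real ^ 'n) pmf" where
  "mgd_step \<alpha> \<eta> grad x =
     map_pmf (\<lambda>\<Delta>. \<chi> i. x $ i - \<alpha> * sgn (grad x $ i) * (if \<Delta> i then 1 else 0))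
       (Pi_pmf UNIV False (\<lambda>i. bernoulli_pmf (min (\<bar>grad x $ i\<bar> / \<eta>) 1)))"

end

theory Submission
  imports Defs
begin

lemma grad_min_zero:
  fixes f :: "real ^ 'n \<Rightarrow> real" and grad :: "real ^ 'n \<Rightarrow> real ^ 'n"
  assumes deriv: "\<And>y. (f has_derivative (\<lambda>h. grad y \<bullet> h)) (at y)"
    and minimizer: "\<And>y. f xstar \<le> f y"
  shows "grad xstar = 0"
proof -
  have "(\<lambda>h. grad xstar \<bullet> h) = (\<lambda>v. 0)"
    using differential_zero_maxmin[of xstar UNIV f "\<lambda>h. grad xstar \<bullet> h"] deriv minimizer by auto
  then have "grad xstar \<bullet> grad xstar = 0" by metis
  then show ?thesis by simp
qed

lemma l1_le:
  fixes g :: "real ^ 'n"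
  shows "(\<Sum>i\<in>UNIV. \<bar>g $ i\<bar>) \<le> sqrt (real CARD('n)) * norm g"
proof -
  define s :: "real ^ 'n" where "s = (\<chi> i. sgn (g $ i))"
  have "(\<Sum>i\<in>UNIV. \<bar>g $ i\<bar>) = g \<bullet> s"
    by (simp add: s_def inner_vec_def abs_sgn)
  also have "\<dots> \<le> norm g * norm s" by (rule norm_cauchy_schwarz)
  also have "norm s \<le> sqrt (real CARD('n))"
  proof -
    have "s \<bullet> s \<le> real CARD('n)"
    proof -
      have "s \<bullet> s = (\<Sum>i\<in>UNIV. (sgn (g $ i))^2)" by (simp add: s_def inner_vec_def power2_eq_square)
      also have "\<dots> \<le> (\<Sum>i\<in>(UNIV::'n set). 1)"
        by (intro sum_mono) (auto simp: sgn_if)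
      finally show ?thesis by simp
    qed
    then show ?thesis by (simp add: norm_eq_sqrt_inner)
  qed
  then have "norm g * norm s \<le> norm g * sqrt (real CARD('n))"
    by (intro mult_left_mono) auto
  finally show ?thesis by (simp add: mult.commute)
qed

lemma nsq: "(norm (v::real^'n))\<^sup>2 = (\<Sum>i\<in>UNIV. (v $ i)\<^sup>2)"
  unfolding power2_norm_eq_inner inner_vec_def by (simp add: power2_eq_square)

theorem corollary6p4:
  fixes f :: "real ^ 'n \<Rightarrow> real" and grad :: "real ^ 'n \<Rightarrow> real ^ 'n"
    and \<mu> L \<alpha> \<eta> :: real and xstar x :: "real ^ 'n"
  assumes deriv: "\<And>y. (f has_derivative (\<lambda>h. grad y \<bullet> h)) (at y)"
    and mu_pos: "\<mu> > 0"
    and strongly_convex: "\<And>y z. (grad y - grad z) \<bullet> (y - z) \<ge> \<mu> * (norm (y - z))\<^sup>2"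
    and lipschitz: "\<And>y z. norm (grad y - grad z) \<le> L * norm (y - z)"
    and minimizer: "\<And>y. f xstar \<le> f y"
    and alpha_pos: "\<alpha> > 0" and eta_pos: "\<eta> > 0"
    and x_lattice: "x \<in> lattice \<alpha>"
    and event: "linf_norm (grad x) \<le> \<eta>"
  shows "measure_pmf.expectation (mgd_step \<alpha> \<eta> grad x) (\<lambda>y. (norm (y - xstar))\<^sup>2)
           \<le> (1 - 2 * \<alpha> * \<mu> / \<eta>) * (norm (x - xstar))\<^sup>2
              + L * \<alpha>\<^sup>2 * sqrt (real CARD('n)) / \<eta> * norm (x - xstar)"
proof -
  define g where "g = grad x"
  define d where "d = x - xstar"
  define p where "p = (\<lambda>i. min (\<bar>g $ i\<bar> / \<eta>) 1)"
  define P where "P = Pi_pmf (UNIV :: 'n set) False (\<lambda>i. bernoulli_pmf (p i))"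
  define h where "h = (\<lambda>i (b::bool). (d $ i - \<alpha> * sgn (g $ i) * (if b then 1 else 0))\<^sup>2)"
  have g0: "grad xstar = 0" using grad_min_zero[OF deriv minimizer] .
  have gi: "\<bar>g $ i\<bar> \<le> \<eta>" for i
  proof -
    have "\<bar>g $ i\<bar> \<le> linf_norm g" unfolding linf_norm_def
      by (rule Max_ge) auto
    then show ?thesis using event g_def by simp
  qed
  have p_eq: "p i = \<bar>g $ i\<bar> / \<eta>" for i
    using gi[of i] eta_pos by (simp add: p_def min_def field_simps)
  have p01: "0 \<le> p i" "p i \<le> 1" for i
    using gi[of i] eta_pos by (auto simp: p_eq field_simps)
  have finP: "finite (set_pmf P)" by (rule finite_subset[OF subset_UNIV]) simp
  have "measure_pmf.expectation (mgd_step \<alpha> \<eta> grad x) (\<lambda>y. (norm (y - xstar))\<^sup>2)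
      = measure_pmf.expectation P (\<lambda>\<Delta>. \<Sum>i\<in>UNIV. h i (\<Delta> i))"
    unfolding mgd_step_def P_def p_def g_def h_def d_def integral_map_pmf
    by (intro Bochner_Integration.integral_cong refl) (simp only: nsq, simp add: algebra_simps)
  also have "\<dots> = (\<Sum>i\<in>UNIV. measure_pmf.expectation P (\<lambda>\<Delta>. h i (\<Delta> i)))"
    by (rule Bochner_Integration.integral_sum) (auto intro: integrable_measure_pmf_finite[OF finP])
  also have "\<dots> = (\<Sum>i\<in>UNIV. (d $ i)\<^sup>2 - 2 * \<alpha> / \<eta> * (g $ i * d $ i) + \<alpha>\<^sup>2 / \<eta> * \<bar>g $ i\<bar>)"
  proof (rule sum.cong[OF refl])
    fix i
    have "measure_pmf.expectation P (\<lambda>\<Delta>. h i (\<Delta> i))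
        = measure_pmf.expectation (map_pmf (\<lambda>\<Delta>. \<Delta> i) P) (h i)" by simp
    also have "map_pmf (\<lambda>\<Delta>. \<Delta> i) P = bernoulli_pmf (p i)"
      unfolding P_def by (subst Pi_pmf_component) auto
    also have "measure_pmf.expectation (bernoulli_pmf (p i)) (h i)
        = h i True * p i + h i False * (1 - p i)" using p01[of i] by simp
    also have "\<dots> = (d $ i)\<^sup>2 - 2 * \<alpha> / \<eta> * (g $ i * d $ i) + \<alpha>\<^sup>2 / \<eta> * \<bar>g $ i\<bar>"
      unfolding h_def p_eq using eta_pos
      by (cases "g $ i > 0"; cases "g $ i < 0") (auto simp: field_simps power2_eq_square)
    finally show "measure_pmf.expectation P (\<lambda>\<Delta>. h i (\<Delta> i)) = \<dots>" .
  qed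
  also have "\<dots> = (norm d)\<^sup>2 - 2 * \<alpha> / \<eta> * (g \<bullet> d) + \<alpha>\<^sup>2 / \<eta> * (\<Sum>i\<in>UNIV. \<bar>g $ i\<bar>)"
    unfolding nsq by (simp add: sum.distrib sum_subtractf sum_distrib_left inner_vec_def)
  also have "\<dots> \<le> (1 - 2 * \<alpha> * \<mu> / \<eta>) * (norm d)\<^sup>2 + L * \<alpha>\<^sup>2 * sqrt (real CARD('n)) / \<eta> * norm d"
  proof -
    have sc: "g \<bullet> d \<ge> \<mu> * (norm d)\<^sup>2"
      using strongly_convex[of x xstar] g0 by (simp add: g_def d_def)
    have lg: "norm g \<le> L * norm d" using lipschitz[of x xstar] g0 by (simp add: g_def d_def)
    have "(\<Sum>i\<in>UNIV. \<bar>g $ i\<bar>) \<le> sqrt (real CARD('n)) * (L * norm d)"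
      using l1_le[of g] lg by (meson mult_left_mono order_trans real_sqrt_ge_zero of_nat_0_le_iff)
    then have A: "\<alpha>\<^sup>2 / \<eta> * (\<Sum>i\<in>UNIV. \<bar>g $ i\<bar>) \<le> \<alpha>\<^sup>2 / \<eta> * (sqrt (real CARD('n)) * (L * norm d))"
      using eta_pos by (intro mult_left_mono) auto
    have B: "2 * \<alpha> / \<eta> * (\<mu> * (norm d)\<^sup>2) \<le> 2 * \<alpha> / \<eta> * (g \<bullet> d)"
      using sc eta_pos alpha_pos by (intro mult_left_mono) auto
    show ?thesis using A B by (simp add: field_simps)
  qed
  finally show ?thesis by (simp add: d_def)
qed

end
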